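(* For every $n\in\mathbb{N}$ let $\sigma=\sigma_n$ be a uniformly distributed random permutation in $\mathcal{S}_n$, and let $$X_n=\frac{1}{\sqrt{n}}\operatorname{Re}\Big[\frac{1}{n}\sum_{k=1}^n\sigma(k)e^{2\pi i k/n}\Big]=\sum_{j=1}^n\frac{\sigma(j)}{n^{3/2}}\cos\Big(\frac{2\pi j}{n}\Big).$$ Then for every $m\in\mathbb{N}$, $$\lim_{n\to\infty}\mathbb{E}\big[X_n^{2m}\big]=\frac{(2m)!}{m!}\,\frac{1}{48^m}\qquad\text{and}\qquad \lim_{n\to\infty}\mathbb{E}\big[X_n^{2m-1}\big]=0.$$
   Context: $\mathbb{E}[X_n^k]=\frac{1}{n!}\sum_{\sigma\in\mathcal{S}_n}X_n(\sigma)^k$. *)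

theory Defs
  imports "HOL-Analysis.Analysis" "HOL-Combinatorics.Permutations"
begin

definition Xn :: "nat \<Rightarrow> (nat \<Rightarrow> nat) \<Rightarrow> real" where
  "Xn n \<sigma> = (\<Sum>j=1..n. real (\<sigma> j) / (real n powr (3/2)) * cos (2 * pi * real j / real n))"

definition moment :: "nat \<Rightarrow> nat \<Rightarrow> real" where
  "moment n k = (1 / fact n) * (\<Sum>\<sigma>\<in>{\<sigma>. \<sigma> permutes {1..n}}. Xn n \<sigma> ^ k)"

end

theory Submission
  imports Defs "HOL-Real_Asymp.Real_Asymp"
begin


lemma rem_rec:
  fixes x d :: real
  shows "(x+d)^(Suc k) - x^(Suc k) - real (Suc k) * x^k * d
       = (x+d) * ((x+d)^k - x^k - real k * x^(k-1) * d) + real k * x^(k-1) * d^2"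
proof (cases k)
  case 0 thus ?thesis by simp
next
  case (Suc j)
  thus ?thesis by (simp add: algebra_simps power2_eq_square)
qed

lemma rem_bound:
  fixes x d :: real
  assumes "\<bar>d\<bar> \<le> 1"
  shows "\<bar>(x+d)^k - x^k - real k * x^(k-1) * d\<bar> \<le> real k ^ 2 * d^2 * (1 + \<bar>x\<bar>)^k"
proof (induction k)
  case 0 thus ?case by simp
next
  case (Suc k)
  have h1: "\<bar>x + d\<bar> \<le> 1 + \<bar>x\<bar>" using assms by linarith
  have h2: "\<bar>x\<bar>^(k-1) \<le> (1 + \<bar>x\<bar>)^(k+1)"
  proof -
    have "k - 1 \<le> k + 1" by simp
    hence "(1+\<bar>x\<bar>)^(k-1) \<le> (1+\<bar>x\<bar>)^(k+1)" by (rule power_increasing) simp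
    moreover have "\<bar>x\<bar>^(k-1) \<le> (1+\<bar>x\<bar>)^(k-1)" by (rule power_mono) auto
    ultimately show ?thesis by linarith
  qed
  have "\<bar>(x+d)^(Suc k) - x^(Suc k) - real (Suc k) * x^k * d\<bar>
      \<le> \<bar>x+d\<bar> * \<bar>(x+d)^k - x^k - real k * x^(k-1) * d\<bar> + real k * \<bar>x\<bar>^(k-1) * d^2"
    unfolding rem_rec by (simp add: abs_mult power_abs abs_triangle_ineq[THEN order_trans])
  also have "\<dots> \<le> (1 + \<bar>x\<bar>) * (real k ^ 2 * d^2 * (1 + \<bar>x\<bar>)^k) + real k * (1 + \<bar>x\<bar>)^(k+1) * d^2"
    by (intro add_mono mult_mono Suc h1 h2) auto
  also have "\<dots> = (real k ^ 2 + real k) * d^2 * (1 + \<bar>x\<bar>)^(Suc k)"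
    by (simp add: algebra_simps)
  also have "\<dots> \<le> real (Suc k) ^ 2 * d^2 * (1 + \<bar>x\<bar>)^(Suc k)"
    by (intro mult_right_mono) (auto simp: power2_eq_square algebra_simps)
  finally show ?case by simp
qed

lemma pow_bound1:
  fixes x :: real
  shows "(1 + \<bar>x\<bar>)^k \<le> 2^k * (1 + \<bar>x\<bar>^k)"
proof (cases "\<bar>x\<bar> \<le> 1")
  case True
  have "(1 + \<bar>x\<bar>)^k \<le> 2^k" using True by (intro power_mono) auto
  moreover have "0 \<le> 2^k * \<bar>x\<bar>^k" by simp
  moreover have "(2::real)^k*(1+\<bar>x\<bar>^k) = 2^k + 2^k*\<bar>x\<bar>^k" by (simp add: ring_distribs)
  ultimately show ?thesis by linarith
next
  case False
  have "(1 + \<bar>x\<bar>)^k \<le> (2*\<bar>x\<bar>)^k" using False by (intro power_mono) auto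
  moreover have "(2*\<bar>x\<bar>)^k = 2^k * \<bar>x\<bar>^k" by (simp add: power_mult_distrib)
  moreover have "0 \<le> (2::real)^k" by simp
  moreover have "(2::real)^k*(1+\<bar>x\<bar>^k) = 2^k + 2^k*\<bar>x\<bar>^k" by (simp add: ring_distribs)
  ultimately show ?thesis by linarith
qed

lemma pow_odd_bound:
  fixes x :: real
  shows "\<bar>x\<bar>^(2*m-1) \<le> 1 + x^(2*m)"
proof (cases "\<bar>x\<bar> \<le> 1")
  case True
  have "\<bar>x\<bar>^(2*m-1) \<le> 1" using True by (simp add: power_le_one)
  thus ?thesis by (smt (verit) zero_le_power_eq_numeral zero_le_even_power' even_mult_iff even_numeral)
next
  case False
  have "\<bar>x\<bar>^(2*m-1) \<le> \<bar>x\<bar>^(2*m)" using False by (intro power_increasing) auto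
  thus ?thesis by (simp add: power_abs[symmetric] )
qed




lemma sq_expand:
  fixes a \<beta> :: "nat \<Rightarrow> real"
  assumes fin: "finite S" and sa: "sum a S = 0" and sb: "sum \<beta> S = 0"
  shows "(\<Sum>I\<in>S. \<Sum>J\<in>S. (a I - a J)^2 * (\<beta> J - \<beta> I)^2)
    = 2 * real (card S) * (\<Sum>j\<in>S. (a j)^2 * (\<beta> j)^2) + 2 * (\<Sum>j\<in>S. (a j)^2) * (\<Sum>j\<in>S. (\<beta> j)^2)
      + 4 * (\<Sum>j\<in>S. a j * \<beta> j)^2"
proof -
  define T2 where "T2 = (\<Sum>j\<in>S. (a j)^2 * (\<beta> j)^2)"
  define Pa where "Pa = (\<Sum>j\<in>S. (a j)^2)"
  define Pb where "Pb = (\<Sum>j\<in>S. (\<beta> j)^2)"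
  define T where "T = (\<Sum>j\<in>S. a j * \<beta> j)"
  define Q where "Q = (\<Sum>j\<in>S. (a j)^2 * \<beta> j)"
  define R where "R = (\<Sum>j\<in>S. a j * (\<beta> j)^2)"
  have pt: "(a I - a J)^2 * (\<beta> J - \<beta> I)^2 = a I^2*\<beta> I^2 + a I^2 * \<beta> J^2 + \<beta> I^2 * a J^2
     + a J^2*\<beta> J^2 - 2*(a I^2*\<beta> I)*\<beta> J - 2*\<beta> I * (a J^2 * \<beta> J)
     - 2*(a I*\<beta> I^2)*a J - 2*a I*(a J*\<beta> J^2) + 4*(a I*\<beta> I)*(a J*\<beta> J)" for I J
    by (simp add: power2_eq_square algebra_simps)
  have inner: "(\<Sum>J\<in>S. (a I - a J)^2 * (\<beta> J - \<beta> I)^2)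
     = (real (card S) * (a I^2*\<beta> I^2) + T2) + a I^2 * Pb + \<beta> I^2 * Pa - 2 * \<beta> I * Q - 2 * a I * R
       + 4 * (a I * \<beta> I) * T" for I
  proof (cases "S = {}")
    case True thus ?thesis by (simp add: T2_def Pa_def Pb_def Q_def R_def T_def)
  next
    case False
    hence cS: "real (card S) > 0" using fin by (simp add: card_gt_0_iff)
    have "(\<Sum>J\<in>S. (a I - a J)^2 * (\<beta> J - \<beta> I)^2) = 
      real (card S) * (a I^2*\<beta> I^2) + a I^2 * Pb + \<beta> I^2 * Pa + T2
       - 2*(a I^2*\<beta> I)*(\<Sum>J\<in>S. \<beta> J) - 2 * \<beta> I * Q - 2*(a I*\<beta> I^2)*(\<Sum>J\<in>S. a J) - 2 * a I * R
       + 4 * (a I * \<beta> I) * T"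
      unfolding pt by (simp add: sum.distrib sum_subtractf sum_distrib_left[symmetric] T2_def Pa_def Pb_def Q_def R_def T_def)
    thus ?thesis using cS by (simp add: sa sb distrib_left)
  qed
  have "(\<Sum>I\<in>S. \<Sum>J\<in>S. (a I - a J)^2 * (\<beta> J - \<beta> I)^2) =
     (real (card S) * T2 + real (card S) * T2) + Pa * Pb + Pb * Pa - 2 * (\<Sum>I\<in>S. \<beta> I) * Q - 2 * (\<Sum>I\<in>S. a I) * R
       + 4 * T * T"
    unfolding inner by (simp add: sum.distrib sum_subtractf sum_distrib_left[symmetric] sum_distrib_right[symmetric] T2_def Pa_def Pb_def Q_def R_def T_def)
  thus ?thesis by (simp add: sa sb T2_def Pa_def Pb_def T_def power2_eq_square algebra_simps)
qed




locale hs =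
  fixes S :: "nat set" and a b :: "nat \<Rightarrow> real" and c :: real
  assumes fin: "finite S" and sa: "sum a S = 0" and sb: "sum b S = 0"
begin

definition "P = {\<sigma>. \<sigma> permutes S}"
definition "X \<sigma> = c * (\<Sum>j\<in>S. a j * b (\<sigma> j))"
definition "D \<sigma> I J = c * (a I - a J) * (b (\<sigma> J) - b (\<sigma> I))"
definition "V \<sigma> = (\<Sum>j\<in>S. (a j)^2 * (b (\<sigma> j))^2)"

lemma sum_perm: "\<sigma> permutes S \<Longrightarrow> (\<Sum>j\<in>S. f (\<sigma> j)) = sum f S"
  using sum.permute[of \<sigma> S f] by (simp add: o_def)

lemma X_swap: assumes "\<sigma> \<in> P" "I \<in> S" "J \<in> S"
  shows "X (\<sigma> \<circ> Transposition.transpose I J) = X \<sigma> + D \<sigma> I J"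
proof (cases "I = J")
  case True thus ?thesis by (simp add: D_def)
next
  case False
  have "(\<Sum>j\<in>S. a j * b (\<sigma> (Transposition.transpose I J j))) - (\<Sum>j\<in>S. a j * b (\<sigma> j))
      = (\<Sum>j\<in>S. a j * (b (\<sigma> (Transposition.transpose I J j)) - b (\<sigma> j)))"
    by (simp add: sum_subtractf algebra_simps)
  also have "\<dots> = (\<Sum>j\<in>{I,J}. a j * (b (\<sigma> (Transposition.transpose I J j)) - b (\<sigma> j)))"
    by (rule sum.mono_neutral_right) (use assms fin in auto)
  also have "\<dots> = (a I - a J) * (b (\<sigma> J) - b (\<sigma> I))" using False by (simp add: algebra_simps)
  finally have "X (\<sigma> \<circ> Transposition.transpose I J) - X \<sigma> = D \<sigma> I J"
    unfolding X_def D_def by (simp add: right_diff_distrib[symmetric] mult.assoc)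
  thus ?thesis by simp
qed

lemma D_swap: "D (\<sigma> \<circ> Transposition.transpose I J) I J = - D \<sigma> I J"
  by (simp add: D_def algebra_simps)

lemma antisym:
  "(\<Sum>\<sigma>\<in>P. \<Sum>I\<in>S. \<Sum>J\<in>S. D \<sigma> I J * (g (\<sigma> \<circ> Transposition.transpose I J) + g \<sigma>)) = 0"
proof -
  have inner: "(\<Sum>\<sigma>\<in>P. D \<sigma> I J * (g (\<sigma> \<circ> Transposition.transpose I J) + g \<sigma>)) = 0"
    if "I \<in> S" "J \<in> S" for I J
  proof -
    let ?F = "\<lambda>\<sigma>. D \<sigma> I J * (g (\<sigma> \<circ> Transposition.transpose I J) + g \<sigma>)"
    have tp: "Transposition.transpose I J permutes S" using that by (rule permutes_swap_id)
    have "sum ?F P = (\<Sum>\<sigma>\<in>P. ?F (\<sigma> \<circ> Transposition.transpose I J))"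
      unfolding P_def by (rule sum_permutations_compose_right[OF tp])
    also have "\<dots> = (\<Sum>\<sigma>\<in>P. - ?F \<sigma>)"
      by (rule sum.cong) (simp_all add: D_swap comp_assoc algebra_simps)
    also have "\<dots> = - sum ?F P" by (simp add: sum_negf)
    finally show ?thesis by simp
  qed
  have "(\<Sum>\<sigma>\<in>P. \<Sum>I\<in>S. \<Sum>J\<in>S. D \<sigma> I J * (g (\<sigma> \<circ> Transposition.transpose I J) + g \<sigma>))
      = (\<Sum>I\<in>S. \<Sum>J\<in>S. \<Sum>\<sigma>\<in>P. D \<sigma> I J * (g (\<sigma> \<circ> Transposition.transpose I J) + g \<sigma>))"
    by (simp add: sum.swap[of _ P] sum.swap[of _ P S])
  also have "\<dots> = 0" using inner by simp
  finally show ?thesis .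
qed

lemma sumD: assumes "\<sigma> \<in> P" shows "(\<Sum>I\<in>S. \<Sum>J\<in>S. D \<sigma> I J) = - 2 * real (card S) * X \<sigma>"
proof -
  have sbs: "(\<Sum>J\<in>S. b (\<sigma> J)) = 0" using assms sb by (simp add: P_def sum_perm)
  define T where "T = (\<Sum>J\<in>S. a J * b (\<sigma> J))"
  have "(\<Sum>J\<in>S. D \<sigma> I J) = c * (- real (card S) * a I * b (\<sigma> I) - T)" for I
  proof -
    have "(\<Sum>J\<in>S. D \<sigma> I J) = c * (\<Sum>J\<in>S. a I * b (\<sigma> J) - a I * b (\<sigma> I) - a J * b (\<sigma> J) + a J * b (\<sigma> I))"
      unfolding D_def by (simp add: sum_distrib_left algebra_simps)
    also have "\<dots> = c * (a I * (\<Sum>J\<in>S. b (\<sigma> J)) - real (card S) * (a I * b (\<sigma> I)) - T + (\<Sum>J\<in>S. a J) * b (\<sigma> I))"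
      by (simp add: sum.distrib sum_subtractf sum_distrib_left sum_distrib_right T_def)
    finally show ?thesis by (simp add: sbs sa)
  qed
  hence "(\<Sum>I\<in>S. \<Sum>J\<in>S. D \<sigma> I J) = (\<Sum>I\<in>S. c * (- real (card S) * a I * b (\<sigma> I) - T))"
    by simp
  also have "\<dots> = (\<Sum>I\<in>S. (- c * real (card S)) * (a I * b (\<sigma> I))) - (\<Sum>I\<in>S. c * T)"
    by (subst sum_subtractf[symmetric]) (rule sum.cong; simp add: algebra_simps)
  also have "\<dots> = (- c * real (card S)) * T - real (card S) * (c * T)"
    unfolding T_def sum_distrib_left[symmetric] by simp
  also have "\<dots> = c * (- real (card S) * T - real (card S) * T)"
    by (simp add: algebra_simps)
  finally show ?thesis by (simp add: X_def T_def algebra_simps)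
qed

lemma key: "4 * real (card S) * (\<Sum>\<sigma>\<in>P. g \<sigma> * X \<sigma>)
   = (\<Sum>\<sigma>\<in>P. \<Sum>I\<in>S. \<Sum>J\<in>S. D \<sigma> I J * (g (\<sigma> \<circ> Transposition.transpose I J) - g \<sigma>))"
proof -
  have "(\<Sum>\<sigma>\<in>P. \<Sum>I\<in>S. \<Sum>J\<in>S. D \<sigma> I J * (g (\<sigma> \<circ> Transposition.transpose I J) - g \<sigma>))
     = (\<Sum>\<sigma>\<in>P. \<Sum>I\<in>S. \<Sum>J\<in>S. D \<sigma> I J * (g (\<sigma> \<circ> Transposition.transpose I J) + g \<sigma>))
       - (\<Sum>\<sigma>\<in>P. 2 * g \<sigma> * (\<Sum>I\<in>S. \<Sum>J\<in>S. D \<sigma> I J))"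
    by (simp add: sum_subtractf[symmetric] sum_distrib_left ring_distribs) (simp add: ac_simps)
  also have "\<dots> = - (\<Sum>\<sigma>\<in>P. 2 * g \<sigma> * (- 2 * real (card S) * X \<sigma>))"
    using antisym[of g] by (simp add: sumD)
  also have "\<dots> = 4 * real (card S) * (\<Sum>\<sigma>\<in>P. g \<sigma> * X \<sigma>)"
    by (simp add: sum_distrib_left sum_negf[symmetric] algebra_simps)
  finally show ?thesis ..
qed

lemma sumD2: assumes "\<sigma> \<in> P"
  shows "(\<Sum>I\<in>S. \<Sum>J\<in>S. (D \<sigma> I J)^2)
     = c^2 * (2 * real (card S) * V \<sigma> + 2 * (\<Sum>j\<in>S. (a j)^2) * (\<Sum>j\<in>S. (b j)^2)) + 4 * (X \<sigma>)^2"
proof -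
  have sbs: "(\<Sum>J\<in>S. b (\<sigma> J)) = 0" using assms sb by (simp add: P_def sum_perm)
  have sbs2: "(\<Sum>J\<in>S. (b (\<sigma> J))^2) = (\<Sum>j\<in>S. (b j)^2)" using assms sum_perm[of \<sigma> "\<lambda>j. (b j)^2"] by (simp add: P_def)
  have "(\<Sum>I\<in>S. \<Sum>J\<in>S. (D \<sigma> I J)^2) = c^2 * (\<Sum>I\<in>S. \<Sum>J\<in>S. (a I - a J)^2 * (b (\<sigma> J) - b (\<sigma> I))^2)"
    by (simp add: D_def sum_distrib_left power_mult_distrib mult.assoc)
  also have "\<dots> = c^2 * (2 * real (card S) * V \<sigma> + 2 * (\<Sum>j\<in>S. (a j)^2) * (\<Sum>j\<in>S. (b j)^2)
       + 4 * (\<Sum>j\<in>S. a j * b (\<sigma> j))^2)"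
    using sq_expand[OF fin sa sbs] sbs2 by (simp add: V_def)
  finally show ?thesis by (simp add: X_def power_mult_distrib algebra_simps)
qed

lemma main_ineq:
  assumes m: "m \<ge> 1" and d1: "\<delta> \<le> 1" and d0: "0 \<le> \<delta>"
    and dB: "\<And>\<sigma> I J. \<sigma> \<in> P \<Longrightarrow> I \<in> S \<Longrightarrow> J \<in> S \<Longrightarrow> \<bar>D \<sigma> I J\<bar> \<le> \<delta>"
  shows "\<bar>4 * real (card S) * (\<Sum>\<sigma>\<in>P. X \<sigma> ^ (2*m))
      - real (2*m-1) * (\<Sum>\<sigma>\<in>P. X \<sigma> ^ (2*m-2) * (c^2 * (2 * real (card S) * V \<sigma>
           + 2 * (\<Sum>j\<in>S. (a j)^2) * (\<Sum>j\<in>S. (b j)^2)) + 4 * (X \<sigma>)^2))\<bar>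
     \<le> real (card S) ^ 2 * \<delta> ^ 3 * (real (2*m-1) ^ 2 * 2 ^ (2*m)) * (\<Sum>\<sigma>\<in>P. 1 + X \<sigma> ^ (2*m))"
proof -
  define k where "k = 2*m-1"
  define K where "K = real k ^ 2 * 2 ^ (2*m)"
  define n where "n = real (card S)"
  define Q where "Q \<sigma> = c^2 * (2 * n * V \<sigma> + 2 * (\<Sum>j\<in>S. (a j)^2) * (\<Sum>j\<in>S. (b j)^2)) + 4 * (X \<sigma>)^2" for \<sigma>
  define Rm where "Rm x d = (x+d)^k - x^k - real k * x^(k-1) * d" for x d :: real
  have km: "k - 1 = 2*m-2" "Suc k = 2*m" using m by (auto simp: k_def)
  have pw: "(\<Sum>I\<in>S. \<Sum>J\<in>S. D \<sigma> I J * (X (\<sigma> \<circ> Transposition.transpose I J) ^ k - X \<sigma> ^ k))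
      = real k * X \<sigma> ^ (k-1) * Q \<sigma> + (\<Sum>I\<in>S. \<Sum>J\<in>S. D \<sigma> I J * Rm (X \<sigma>) (D \<sigma> I J))" if s: "\<sigma> \<in> P" for \<sigma>
  proof -
    have "(\<Sum>I\<in>S. \<Sum>J\<in>S. D \<sigma> I J * (X (\<sigma> \<circ> Transposition.transpose I J) ^ k - X \<sigma> ^ k))
       = (\<Sum>I\<in>S. \<Sum>J\<in>S. real k * X \<sigma> ^ (k-1) * (D \<sigma> I J)^2 + D \<sigma> I J * Rm (X \<sigma>) (D \<sigma> I J))"
      by (intro sum.cong refl) (simp add: X_swap[OF s] Rm_def power2_eq_square algebra_simps)
    also have "\<dots> = real k * X \<sigma> ^ (k-1) * (\<Sum>I\<in>S. \<Sum>J\<in>S. (D \<sigma> I J)^2) + (\<Sum>I\<in>S. \<Sum>J\<in>S. D \<sigma> I J * Rm (X \<sigma>) (D \<sigma> I J))"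
      by (simp add: sum.distrib sum_distrib_left)
    finally show ?thesis using sumD2[OF s] by (simp add: Q_def n_def)
  qed
  have rb: "\<bar>\<Sum>I\<in>S. \<Sum>J\<in>S. D \<sigma> I J * Rm (X \<sigma>) (D \<sigma> I J)\<bar> \<le> n^2 * \<delta>^3 * K * (1 + X \<sigma> ^ (2*m))"
    if s: "\<sigma> \<in> P" for \<sigma>
  proof -
    have "\<bar>D \<sigma> I J * Rm (X \<sigma>) (D \<sigma> I J)\<bar> \<le> \<delta>^3 * K * (1 + X \<sigma> ^ (2*m))" if "I \<in> S" "J \<in> S" for I J
    proof -
      have dd: "\<bar>D \<sigma> I J\<bar> \<le> \<delta>" using dB s that by auto
      have "\<bar>Rm (X \<sigma>) (D \<sigma> I J)\<bar> \<le> real k ^ 2 * (D \<sigma> I J)^2 * (1 + \<bar>X \<sigma>\<bar>)^k"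
        unfolding Rm_def by (rule rem_bound) (use dd d1 in linarith)
      also have "\<dots> \<le> real k ^ 2 * \<delta>^2 * (2^k * (1 + \<bar>X \<sigma>\<bar>^k))"
      proof -
        have h: "(D \<sigma> I J)^2 \<le> \<delta>^2" using dd d0 abs_le_square_iff[of "D \<sigma> I J" \<delta>] by simp
        show ?thesis by (intro mult_mono pow_bound1 h) auto
      qed
      also have "\<dots> \<le> real k ^ 2 * \<delta>^2 * (2^k * (2 + X \<sigma>^(2*m)))"
        using pow_odd_bound[of "X \<sigma>" m] by (intro mult_left_mono) (auto simp: k_def)
      also have "\<dots> = \<delta>^2 * K * (1 + X \<sigma>^(2*m)/2)"
        using km by (simp add: K_def algebra_simps flip: power_Suc)
      also have "\<dots> \<le> \<delta>^2 * K * (1 + X \<sigma>^(2*m))"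
        by (intro mult_left_mono) (auto simp: K_def)
      finally have "\<bar>D \<sigma> I J * Rm (X \<sigma>) (D \<sigma> I J)\<bar> \<le> \<delta> * (\<delta>^2 * K * (1 + X \<sigma>^(2*m)))"
        unfolding abs_mult by (intro mult_mono dd) (auto simp: d0)
      thus ?thesis by (simp add: power3_eq_cube power2_eq_square algebra_simps)
    qed
    hence "\<bar>\<Sum>I\<in>S. \<Sum>J\<in>S. D \<sigma> I J * Rm (X \<sigma>) (D \<sigma> I J)\<bar> \<le> (\<Sum>I\<in>S. \<Sum>J\<in>S. \<delta>^3 * K * (1 + X \<sigma> ^ (2*m)))"
      by (intro order_trans[OF sum_abs] sum_mono order_trans[OF sum_abs]) auto
    thus ?thesis by (simp add: n_def power2_eq_square algebra_simps)
  qed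
  have "4 * n * (\<Sum>\<sigma>\<in>P. X \<sigma> ^ (2*m)) = 4 * n * (\<Sum>\<sigma>\<in>P. X \<sigma> ^ k * X \<sigma>)"
    using km by (simp flip: power_Suc2)
  also have "\<dots> = (\<Sum>\<sigma>\<in>P. real k * X \<sigma> ^ (k-1) * Q \<sigma> + (\<Sum>I\<in>S. \<Sum>J\<in>S. D \<sigma> I J * Rm (X \<sigma>) (D \<sigma> I J)))"
    unfolding n_def key by (rule sum.cong[OF refl pw])
  finally have eq: "4 * n * (\<Sum>\<sigma>\<in>P. X \<sigma> ^ (2*m)) - real k * (\<Sum>\<sigma>\<in>P. X \<sigma> ^ (k-1) * Q \<sigma>)
     = (\<Sum>\<sigma>\<in>P. \<Sum>I\<in>S. \<Sum>J\<in>S. D \<sigma> I J * Rm (X \<sigma>) (D \<sigma> I J))"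
    by (simp add: sum.distrib sum_distrib_left mult.assoc)
  have "\<bar>\<Sum>\<sigma>\<in>P. \<Sum>I\<in>S. \<Sum>J\<in>S. D \<sigma> I J * Rm (X \<sigma>) (D \<sigma> I J)\<bar> \<le> (\<Sum>\<sigma>\<in>P. n^2 * \<delta>^3 * K * (1 + X \<sigma> ^ (2*m)))"
    by (intro order_trans[OF sum_abs] sum_mono rb)
  also have "\<dots> = n^2 * \<delta>^3 * K * (\<Sum>\<sigma>\<in>P. 1 + X \<sigma> ^ (2*m))"
    by (simp add: sum_distrib_left)
  finally show ?thesis using eq km unfolding n_def K_def Q_def k_def by simp
qed

lemma X_bound:
  assumes s: "\<sigma> \<in> P" and A: "\<And>j. j \<in> S \<Longrightarrow> \<bar>a j\<bar> \<le> A" and B: "\<And>j. j \<in> S \<Longrightarrow> \<bar>b j\<bar> \<le> B"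
  shows "\<bar>X \<sigma>\<bar> \<le> \<bar>c\<bar> * (real (card S) * (A * B))"
proof -
  have "\<bar>\<Sum>j\<in>S. a j * b (\<sigma> j)\<bar> \<le> (\<Sum>j\<in>S. A * B)"
  proof (intro order_trans[OF sum_abs] sum_mono)
    fix j assume j: "j \<in> S"
    have "\<sigma> j \<in> S" using s j by (simp add: P_def permutes_in_image)
    thus "\<bar>a j * b (\<sigma> j)\<bar> \<le> A * B" unfolding abs_mult using A[OF j] B
      by (intro mult_mono) (auto intro: order_trans[OF abs_ge_zero])
  qed
  thus ?thesis unfolding X_def abs_mult by (intro mult_left_mono) auto
qed

lemma V_bound:
  assumes s: "\<sigma> \<in> P" and A: "\<And>j. j \<in> S \<Longrightarrow> \<bar>a j\<bar> \<le> A" and B: "\<And>j. j \<in> S \<Longrightarrow> \<bar>b j\<bar> \<le> B"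
  shows "0 \<le> V \<sigma> \<and> V \<sigma> \<le> real (card S) * (A^2 * B^2)"
proof -
  have "(\<Sum>j\<in>S. (a j)^2 * (b (\<sigma> j))^2) \<le> (\<Sum>j\<in>S. A^2 * B^2)"
  proof (intro sum_mono)
    fix j assume j: "j \<in> S"
    have "\<sigma> j \<in> S" using s j by (simp add: P_def permutes_in_image)
    hence "(b (\<sigma> j))^2 \<le> B^2" using B abs_le_square_iff[of "b (\<sigma> j)" B]
      by (metis abs_ge_zero abs_of_nonneg order_trans)
    moreover have "(a j)^2 \<le> A^2" using A[OF j] abs_le_square_iff[of "a j" A]
      by (metis abs_ge_zero abs_of_nonneg order_trans)
    ultimately show "(a j)^2 * (b (\<sigma> j))^2 \<le> A^2 * B^2"
      by (intro mult_mono) auto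
  qed
  moreover have "0 \<le> V \<sigma>" unfolding V_def by (intro sum_nonneg) auto
  ultimately show ?thesis by (simp add: V_def)
qed

lemma D_bound:
  assumes s: "\<sigma> \<in> P" and I: "I \<in> S" and J: "J \<in> S"
    and A: "\<And>j. j \<in> S \<Longrightarrow> \<bar>a j\<bar> \<le> A" and B: "\<And>j. j \<in> S \<Longrightarrow> \<bar>b j\<bar> \<le> B"
  shows "\<bar>D \<sigma> I J\<bar> \<le> \<bar>c\<bar> * (2 * A) * (2 * B)"
proof -
  have "\<sigma> I \<in> S" "\<sigma> J \<in> S" using s I J by (simp_all add: P_def permutes_in_image)
  hence "\<bar>b (\<sigma> J) - b (\<sigma> I)\<bar> \<le> 2 * B" using B[of "\<sigma> I"] B[of "\<sigma> J"] by linarith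
  moreover have "\<bar>a I - a J\<bar> \<le> 2 * A" using A[OF I] A[OF J] by linarith
  ultimately show ?thesis unfolding D_def abs_mult
    by (intro mult_mono) auto
qed

end



lemma sum_cos_zero:
  assumes "0 < q" "q < n"
  shows "(\<Sum>j=1..n. cos (2 * pi * real q * real j / real n)) = 0"
proof -
  define \<omega> where "\<omega> = cis (2 * pi * real q / real n)"
  have n0: "real n > 0" using assms by simp
  have pw: "\<omega> ^ j = cis (2 * pi * real q * real j / real n)" for j
    unfolding \<omega>_def Complex.DeMoivre by (simp add: mult_ac)
  have "\<omega> \<noteq> 1"
  proof
    assume "\<omega> = 1"
    hence "cos (2 * pi * real q / real n) = 1" by (simp add: \<omega>_def complex_eq_iff)
    then obtain k :: int where k: "2 * pi * real q / real n = 2 * pi * of_int k"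
      by (auto simp: cos_one_2pi_int)
    hence "real q = real n * of_int k" using n0 by (simp add: field_simps)
    hence "int q = int n * k" by (metis of_int_eq_iff of_int_mult of_int_of_nat_eq)
    moreover have "k \<le> 0 \<or> k \<ge> 1" by linarith
    ultimately show False using assms
      by (smt (verit) mult_nonneg_nonpos mult_le_cancel_left1 of_nat_0_le_iff of_nat_less_iff)
  qed
  have c1: "cis (2 * pi * real q) = 1" by (rule cis_multiple_2pi) simp
  have "\<omega> ^ n = 1" using n0 c1 by (simp add: pw)
  have "(\<Sum>j<n. \<omega> ^ j) = 0"
    using \<open>\<omega> \<noteq> 1\<close> \<open>\<omega> ^ n = 1\<close> by (simp add: geometric_sum)
  hence "Re (\<Sum>j<n. \<omega> ^ j) = 0" by simp
  hence z: "(\<Sum>j<n. cos (2 * pi * real q * real j / real n)) = 0" by (simp add: pw)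
  have "(\<Sum>j=1..n. cos (2 * pi * real q * real j / real n)) = (\<Sum>j<Suc n. cos (2 * pi * real q * real j / real n)) - 1"
    by (simp add: atLeast1_atMost_eq_remove0 lessThan_Suc_atMost sum.remove[of "{..n}" 0])
  also have "\<dots> = (\<Sum>j<n. cos (2 * pi * real q * real j / real n)) + cos (2 * pi * real q) - 1"
    using n0 by simp
  also have "cos (2 * pi * real q) = 1" using cos_2npi[of q] by (simp add: mult_ac)
  finally show ?thesis using z by simp
qed

definition "ca n j = cos (2 * pi * real j / real n)"
definition "cb n l = real l - (real n + 1) / 2"
definition "cc n = 1 / (real n powr (3/2))"
definition "al n j = (ca n j)^2 - 1/2"
definition "ga n l = (cb n l)^2 - ((real n)^2 - 1) / 12"

lemma sum_ca: "n \<ge> 2 \<Longrightarrow> sum (ca n) {1..n} = 0"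
  using sum_cos_zero[of 1 n] by (simp add: ca_def)

lemma sum_ca2: assumes "n \<ge> 3" shows "(\<Sum>j=1..n. (ca n j)^2) = real n / 2"
proof -
  have "(ca n j)^2 = 1/2 + cos (2 * pi * real 2 * real j / real n) / 2" for j
  proof -
    have "cos (2 * pi * real 2 * real j / real n) = cos (2 * (2 * pi * real j / real n))"
      by (simp add: mult_ac)
    also have "\<dots> = 2 * (ca n j)^2 - 1" unfolding ca_def by (rule cos_double_cos)
    finally show ?thesis by (simp add: field_simps)
  qed
  hence "(\<Sum>j=1..n. (ca n j)^2) = (\<Sum>j=1..n. 1/2 + cos (2 * pi * real 2 * real j / real n) / 2)"
    by simp
  also have "\<dots> = real n / 2 + (\<Sum>j=1..n. cos (2 * pi * real 2 * real j / real n)) / 2"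
    by (simp add: sum.distrib sum_divide_distrib)
  also have "(\<Sum>j=1..n. cos (2 * pi * real 2 * real j / real n)) = 0"
    using assms by (intro sum_cos_zero) auto
  finally show ?thesis by simp
qed

lemma sum_lin: "(\<Sum>l=1..n. real l - x) = real n * (real n + 1) / 2 - real n * x"
  by (induction n) (auto simp: algebra_simps)

lemma sum_sq: "(\<Sum>l=1..n. (real l - x)^2) = real n * (real n + 1) * (2 * real n + 1) / 6 - x * real n * (real n + 1) + real n * x^2"
  by (induction n) (auto simp: algebra_simps power2_eq_square)

lemma sum_cb: "sum (cb n) {1..n} = 0"
  unfolding cb_def sum_lin by (simp add: algebra_simps)

lemma sum_cb2: "(\<Sum>l=1..n. (cb n l)^2) = real n * ((real n)^2 - 1) / 12"
  unfolding cb_def sum_sq by (simp add: algebra_simps power2_eq_square)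

lemma sum_al: "n \<ge> 3 \<Longrightarrow> sum (al n) {1..n} = 0"
  unfolding al_def sum_subtractf by (subst sum_ca2) auto

lemma sum_ga: "sum (ga n) {1..n} = 0"
  unfolding ga_def sum_subtractf sum_cb2 by simp

lemma ca_bound: "\<bar>ca n j\<bar> \<le> 1" by (simp add: ca_def)

lemma cb_bound: assumes "l \<in> {1..n}" shows "\<bar>cb n l\<bar> \<le> real n"
proof -
  have h: "1 \<le> real l" "real l \<le> real n" using assms by auto
  have h1: "real l - (real n + 1) / 2 \<le> real n" using h by (simp add: field_simps)
  have h2: "(real n + 1) / 2 - real l \<le> real n" using h by (simp add: field_simps)
  show ?thesis unfolding cb_def abs_le_iff minus_diff_eq using h1 h2 by (rule conjI)
qed

lemma al_bound: "\<bar>al n j\<bar> \<le> 1"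
proof -
  have "(ca n j)^2 \<le> 1" using ca_bound[of n j] by (simp add: abs_square_le_1)
  moreover have "0 \<le> (ca n j)^2" by simp
  ultimately show ?thesis unfolding al_def abs_le_iff by linarith
qed

lemma ga_bound: assumes "l \<in> {1..n}" shows "\<bar>ga n l\<bar> \<le> (real n)^2"
proof -
  have "(cb n l)^2 \<le> (real n)^2" using cb_bound[OF assms] abs_le_square_iff[of "cb n l" "real n"] by simp
  moreover have "0 \<le> (cb n l)^2" by simp
  moreover have "1 \<le> (real n)^2" using assms by (simp add: one_le_power)
  moreover have "((real n)^2 - 1) / 12 \<le> (real n)^2" using calculation by (auto simp: field_simps)
  moreover have "0 \<le> ((real n)^2 - 1) / 12" using calculation by simp
  ultimately show ?thesis unfolding ga_def by linarith
qed

lemma cc_eq: assumes "n > 0" shows "cc n = 1 / (real n * sqrt (real n))"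
proof -
  have "real n powr (3/2) = real n powr 1 * real n powr (1/2)" by (subst powr_add[symmetric]) simp
  also have "\<dots> = real n * sqrt (real n)" using assms by (simp add: powr_half_sqrt)
  finally show ?thesis by (simp add: cc_def)
qed

lemma cc_sq: assumes "n > 0" shows "(cc n)^2 = 1 / (real n)^3"
  using assms by (simp add: cc_eq power_mult_distrib power_divide power3_eq_cube power2_eq_square)

lemma cc_pos: "n > 0 \<Longrightarrow> cc n > 0" by (simp add: cc_def)

lemma inst1: "n \<ge> 2 \<Longrightarrow> hs {1..n} (ca n) (cb n)"
  by unfold_locales (use sum_ca[of n] sum_cb[of n] in auto)

lemma inst2: "n \<ge> 3 \<Longrightarrow> hs {1..n} (al n) (ga n)"
  by unfold_locales (use sum_al[of n] sum_ga[of n] in auto)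

lemma Xn_eq: assumes "n \<ge> 2" "\<sigma> permutes {1..n}" shows "Xn n \<sigma> = hs.X {1..n} (ca n) (cb n) (cc n) \<sigma>"
proof -
  have "hs.X {1..n} (ca n) (cb n) (cc n) \<sigma> = cc n * (\<Sum>j=1..n. ca n j * real (\<sigma> j) - ((real n + 1)/2) * ca n j)"
    unfolding hs.X_def[OF inst1[OF assms(1)]] cb_def by (simp add: algebra_simps)
  also have "\<dots> = cc n * ((\<Sum>j=1..n. ca n j * real (\<sigma> j)) - ((real n + 1)/2) * sum (ca n) {1..n})"
    by (simp add: sum_subtractf sum_distrib_left)
  also have "\<dots> = cc n * (\<Sum>j=1..n. ca n j * real (\<sigma> j))" using sum_ca[OF assms(1)] by simp
  also have "\<dots> = (\<Sum>j=1..n. real (\<sigma> j) / (real n powr (3/2)) * cos (2 * pi * real j / real n))"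
    by (simp add: sum_distrib_left cc_def ca_def mult.commute)
  finally show ?thesis by (simp add: Xn_def)
qed




definition PP :: "nat \<Rightarrow> (nat \<Rightarrow> nat) set" where "PP n = {\<sigma>. \<sigma> permutes {1..n}}"
definition "X1 n = hs.X {1..n} (ca n) (cb n) (cc n)"
definition "Yc n = hs.X {1..n} (al n) (ga n) ((cc n)^2)"
definition "Mo m n = moment n (2*m)"
definition "Zc m n = (1/fact n) * (\<Sum>\<sigma>\<in>PP n. Xn n \<sigma> ^ (2*m-2) * Yc n \<sigma>)"
definition "EY n = (1/fact n) * (\<Sum>\<sigma>\<in>PP n. (Yc n \<sigma>)^2)"

lemma card_PP: "card (PP n) = fact n"
  unfolding PP_def by (rule card_permutations) auto

lemma fin_PP: "finite (PP n)"
  unfolding PP_def by (rule finite_permutations) simp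

lemma Mo_alt: "n \<ge> 2 \<Longrightarrow> Mo m n = (1/fact n) * (\<Sum>\<sigma>\<in>PP n. X1 n \<sigma> ^ (2*m))"
  unfolding Mo_def moment_def PP_def X1_def by (simp add: Xn_eq)

lemma Mo_nonneg: "Mo m n \<ge> 0"
  unfolding Mo_def moment_def by (intro mult_nonneg_nonneg sum_nonneg) (auto simp: zero_le_even_power)

lemma Mo_0: "Mo 0 n = 1"
  unfolding Mo_def moment_def using card_PP[of n] by (simp add: PP_def)

lemma Y_alt: assumes n: "n \<ge> 3" and s: "\<sigma> \<in> PP n"
  shows "Yc n \<sigma> = (cc n)^2 * (hs.V {1..n} (ca n) (cb n) \<sigma> - real n * ((real n)^2 - 1) / 24)"
proof -
  have n2: "n \<ge> 2" using n by simp
  have s': "\<sigma> permutes {1..n}" using s by (simp add: PP_def)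
  have pb: "(\<Sum>j=1..n. (cb n (\<sigma> j))^2) = real n * ((real n)^2 - 1) / 12"
    using hs.sum_perm[OF inst1[OF n2] s', of "\<lambda>j. (cb n j)^2"] n sum_cb2[of n] by simp
  have "Yc n \<sigma> = (cc n)^2 * (\<Sum>j=1..n. (ca n j)^2 * (cb n (\<sigma> j))^2 - (1/2) * (cb n (\<sigma> j))^2
        - ((real n)^2 - 1) / 12 * (ca n j)^2 + ((real n)^2 - 1) / 24)"
    unfolding Yc_def hs.X_def[OF inst2[OF n]]
    by (rule arg_cong[where f="\<lambda>x. (cc n)^2 * x"], rule sum.cong, simp, simp add: al_def ga_def field_simps)
  also have "\<dots> = (cc n)^2 * (hs.V {1..n} (ca n) (cb n) \<sigma> - (1/2) * (\<Sum>j=1..n. (cb n (\<sigma> j))^2)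
        - ((real n)^2 - 1) / 12 * (\<Sum>j=1..n. (ca n j)^2) + real n * (((real n)^2 - 1) / 24))"
    unfolding hs.V_def[OF inst1[OF n2]] using n
    by (simp add: sum.distrib sum_subtractf sum_distrib_left)
  also have "\<dots> = (cc n)^2 * (hs.V {1..n} (ca n) (cb n) \<sigma> - real n * ((real n)^2 - 1) / 24)"
    using n by (simp only: pb sum_ca2[OF n]) (simp add: field_simps)
  finally show ?thesis .
qed

lemma sqrt_facts: assumes "n > 0"
  shows "real n * cc n = 1 / sqrt (real n)" and "real n * sqrt (real n) * cc n = 1"
  using assms by (simp_all add: cc_eq field_simps)

lemma ineq_main:
  assumes n: "n \<ge> 16" and m: "m \<ge> 1"
  shows "\<bar>Mo m n - real (2*m-1) * (Zc m n / 2 + ((real n)^2 - 1) / (24 * (real n)^2) * Mo (m-1) n + Mo m n / real n)\<bar>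
     \<le> 16 * (real (2*m-1) ^ 2 * 2 ^ (2*m)) / sqrt (real n) * (1 + Mo m n)"
proof -
  have n2: "n \<ge> 2" and n3: "n \<ge> 3" and n0: "n > 0" using n by auto
  interpret H: hs "{1..n}" "ca n" "cb n" "cc n" by (rule inst1[OF n2])
  define K where "K = real (2*m-1) ^ 2 * 2 ^ (2*m)"
  define \<delta> where "\<delta> = 4 / sqrt (real n)"
  define F where "F = (fact n :: real)"
  define SX where "SX k = (\<Sum>\<sigma>\<in>PP n. X1 n \<sigma> ^ k)" for k
  define SZ where "SZ = (\<Sum>\<sigma>\<in>PP n. X1 n \<sigma> ^ (2*m-2) * Yc n \<sigma>)"
  define q where "q = ((real n)^2 - 1) / (6 * real n)"
  have F0: "F > 0" by (simp add: F_def)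
  have sn: "sqrt (real n) \<ge> 4"
  proof -
    have "sqrt 16 \<le> sqrt (real n)" using n by (subst real_sqrt_le_iff) simp
    thus ?thesis by simp
  qed
  have d1: "\<delta> \<le> 1" and d0: "0 \<le> \<delta>" using sn by (auto simp: \<delta>_def divide_le_eq)
  have cc0: "cc n > 0" using n0 by (rule cc_pos)
  have dB: "\<bar>H.D \<sigma> I J\<bar> \<le> \<delta>" if "\<sigma> \<in> H.P" "I \<in> {1..n}" "J \<in> {1..n}" for \<sigma> I J
  proof -
    have "\<bar>H.D \<sigma> I J\<bar> \<le> \<bar>cc n\<bar> * (2 * 1) * (2 * real n)"
      by (rule H.D_bound[OF that]) (auto simp: ca_bound cb_bound)
    also have "\<dots> = 4 * (real n * cc n)" using cc0 by simp
    also have "\<dots> = \<delta>" using sqrt_facts(1)[OF n0] by (simp add: \<delta>_def)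
    finally show ?thesis .
  qed
  have PPeq: "H.P = PP n" unfolding H.P_def PP_def ..
  have Xeq: "H.X = X1 n" unfolding X1_def ..
  note MI = H.main_ineq[OF m d1 d0 dB, unfolded PPeq Xeq]
  have pa: "(\<Sum>j\<in>{1..n}. (ca n j)^2) = real n / 2" using sum_ca2[OF n3] by simp
  have pb: "(\<Sum>j\<in>{1..n}. (cb n j)^2) = real n * ((real n)^2 - 1) / 12" using sum_cb2[of n] by simp
  have csq: "(cc n)^2 = 1 / (real n)^3" using cc_sq[OF n0] .
  have pt: "X1 n \<sigma> ^ (2*m-2) * ((cc n)^2 * (2 * real (card {1..n}) * H.V \<sigma>
           + 2 * (\<Sum>j\<in>{1..n}. (ca n j)^2) * (\<Sum>j\<in>{1..n}. (cb n j)^2)) + 4 * (X1 n \<sigma>)^2)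
        = 2 * real n * (X1 n \<sigma> ^ (2*m-2) * Yc n \<sigma>) + q * X1 n \<sigma> ^ (2*m-2) + 4 * X1 n \<sigma> ^ (2*m)"
    if s: "\<sigma> \<in> PP n" for \<sigma>
  proof -
    have e: "X1 n \<sigma> ^ (2*m-2) * (X1 n \<sigma>)^2 = X1 n \<sigma> ^ (2*m)"
    proof -
      obtain k where k: "m = Suc k" using m by (cases m) auto
      have "X1 n \<sigma> ^ (2*k) * (X1 n \<sigma>)^2 = X1 n \<sigma> ^ (2*k+2)" by (simp only: power_add)
      thus ?thesis using k by simp
    qed
    have "(cc n)^2 * (2 * real n * H.V \<sigma> + 2 * (real n / 2) * (real n * ((real n)^2 - 1) / 12))
        = 2 * real n * Yc n \<sigma> + q"
      unfolding Y_alt[OF n3 s] q_def csq using n0 by (simp add: field_simps power3_eq_cube power2_eq_square)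
    hence "X1 n \<sigma> ^ (2*m-2) * ((cc n)^2 * (2 * real (card {1..n}) * H.V \<sigma>
           + 2 * (\<Sum>j\<in>{1..n}. (ca n j)^2) * (\<Sum>j\<in>{1..n}. (cb n j)^2)) + 4 * (X1 n \<sigma>)^2)
       = X1 n \<sigma> ^ (2*m-2) * (2 * real n * Yc n \<sigma> + q + 4 * (X1 n \<sigma>)^2)"
      unfolding pa pb by simp
    thus ?thesis using e by (simp add: algebra_simps)
  qed
  have h1: "(\<Sum>\<sigma>\<in>PP n. X1 n \<sigma> ^ (2*m-2) * ((cc n)^2 * (2 * real (card {1..n}) * H.V \<sigma>
           + 2 * (\<Sum>j\<in>{1..n}. (ca n j)^2) * (\<Sum>j\<in>{1..n}. (cb n j)^2)) + 4 * (X1 n \<sigma>)^2))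
       = 2 * real n * SZ + q * SX (2*m-2) + 4 * SX (2*m)"
    apply (subst sum.cong[OF refl pt], assumption)
    by (simp add: sum.distrib sum_distrib_left SZ_def SX_def)
  have h2: "(\<Sum>\<sigma>\<in>PP n. 1 + X1 n \<sigma> ^ (2*m)) = F + SX (2*m)"
    by (simp add: sum.distrib card_PP F_def SX_def)
  have MI2: "\<bar>4 * real n * SX (2*m) - real (2*m-1) * (2 * real n * SZ + q * SX (2*m-2) + 4 * SX (2*m))\<bar>
      \<le> real n ^ 2 * \<delta> ^ 3 * K * (F + SX (2*m))"
    using MI unfolding h1 h2 by (simp add: SX_def K_def)
  have Mm: "Mo m n = SX (2*m) / F" using Mo_alt[OF n2, of m] by (simp add: SX_def F_def)
  have Mm1: "Mo (m-1) n = SX (2*m-2) / F" using Mo_alt[OF n2, of "m-1"] by (simp add: SX_def F_def right_diff_distrib')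
  have Zz: "Zc m n = SZ / F"
  proof -
    have "(\<Sum>\<sigma>\<in>PP n. Xn n \<sigma> ^ (2*m-2) * Yc n \<sigma>) = SZ"
      unfolding SZ_def by (rule sum.cong[OF refl]) (simp add: Xn_eq[OF n2] PP_def X1_def)
    thus ?thesis by (simp add: Zc_def F_def)
  qed
  have sq3: "sqrt (real n) ^ 3 = real n * sqrt (real n)"
    by (simp add: power3_eq_cube)
  have snp: "sqrt (real n) > 0" using n0 by simp
  define A where "A = 4 * real n * SX (2*m) - real (2*m-1) * (2 * real n * SZ + q * SX (2*m-2) + 4 * SX (2*m))"
  have eqL: "A / (4 * real n * F) = Mo m n - real (2*m-1) * (Zc m n / 2 + ((real n)^2 - 1) / (24 * (real n)^2) * Mo (m-1) n + Mo m n / real n)"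
  proof -
    have e1: "A / (4 * real n * F) = SX (2*m) / F - real (2*m-1) * ((SZ / F) / 2 + (q / (4 * real n)) * (SX (2*m-2) / F) + (SX (2*m) / F) / real n)"
      unfolding A_def using n0 F0 by (simp add: field_simps)
    have e2: "q / (4 * real n) = ((real n)^2 - 1) / (24 * (real n)^2)"
      unfolding q_def using n0 by (simp add: field_simps power2_eq_square)
    show ?thesis unfolding e1 e2 Mm Mm1 Zz ..
  qed
  have d3: "\<delta>^3 = 64 / (real n * sqrt (real n))" unfolding \<delta>_def power_divide sq3 by simp
  have eqR: "real n ^ 2 * \<delta> ^ 3 * K * (F + SX (2*m)) / (4 * real n * F) = 16 * K / sqrt (real n) * (1 + Mo m n)"
    unfolding d3 Mm using n0 F0 snp by (simp add: field_simps power2_eq_square)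
  have pos: "0 < 4 * real n * F" using n0 F0 by simp
  have "\<bar>A / (4 * real n * F)\<bar> = \<bar>A\<bar> / (4 * real n * F)" using pos by (simp add: abs_divide)
  also have "\<dots> \<le> real n ^ 2 * \<delta> ^ 3 * K * (F + SX (2*m)) / (4 * real n * F)"
    by (rule divide_right_mono[OF MI2[folded A_def]]) (use pos in simp)
  also have "\<dots> = 16 * K / sqrt (real n) * (1 + Mo m n)" by (rule eqR)
  finally have "\<bar>A / (4 * real n * F)\<bar> \<le> 16 * K / sqrt (real n) * (1 + Mo m n)" .
  thus ?thesis unfolding eqL K_def .
qed

lemma Y_bound: assumes n: "n \<ge> 3" and s: "\<sigma> \<in> PP n" shows "\<bar>Yc n \<sigma>\<bar> \<le> 1"
proof -
  interpret H2: hs "{1..n}" "al n" "ga n" "(cc n)^2" by (rule inst2[OF n])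
  have n0: "n > 0" using n by simp
  have s': "\<sigma> \<in> H2.P" using s unfolding H2.P_def PP_def .
  have "\<bar>Yc n \<sigma>\<bar> \<le> \<bar>(cc n)^2\<bar> * (real (card {1..n}) * (1 * (real n)^2))"
    unfolding Yc_def by (rule H2.X_bound[OF s']) (auto simp: al_bound ga_bound)
  also have "\<dots> = 1" using n0 unfolding cc_sq[OF n0] by (simp add: power3_eq_cube power2_eq_square)
  finally show ?thesis .
qed

lemma Z_bound1: assumes n: "n \<ge> 3" shows "\<bar>Zc m n\<bar> \<le> Mo (m-1) n"
proof -
  have n2: "n \<ge> 2" using n by simp
  have "\<bar>\<Sum>\<sigma>\<in>PP n. Xn n \<sigma> ^ (2*m-2) * Yc n \<sigma>\<bar> \<le> (\<Sum>\<sigma>\<in>PP n. Xn n \<sigma> ^ (2*(m-1)))"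
  proof (rule order_trans[OF sum_abs], rule sum_mono)
    fix \<sigma> assume s: "\<sigma> \<in> PP n"
    have "\<bar>Xn n \<sigma> ^ (2*m-2) * Yc n \<sigma>\<bar> \<le> \<bar>Xn n \<sigma> ^ (2*m-2)\<bar> * 1"
      unfolding abs_mult by (intro mult_left_mono Y_bound[OF n s]) auto
    also have "\<dots> = Xn n \<sigma> ^ (2*(m-1))" by (simp add: right_diff_distrib' zero_le_even_power)
    finally show "\<bar>Xn n \<sigma> ^ (2*m-2) * Yc n \<sigma>\<bar> \<le> Xn n \<sigma> ^ (2*(m-1))" .
  qed
  hence "(1 / fact n) * \<bar>\<Sum>\<sigma>\<in>PP n. Xn n \<sigma> ^ (2*m-2) * Yc n \<sigma>\<bar> \<le> (1 / fact n) * (\<Sum>\<sigma>\<in>PP n. Xn n \<sigma> ^ (2*(m-1)))"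
    by (intro mult_left_mono) auto
  thus ?thesis unfolding Zc_def Mo_def moment_def PP_def abs_mult by simp
qed

lemma young: fixes x y s :: real assumes "s > 0" shows "\<bar>x * y\<bar> \<le> (x^2 / s + s * y^2) / 2"
proof -
  have "0 \<le> (\<bar>x\<bar> - s * \<bar>y\<bar>)^2" by simp
  hence "2 * s * \<bar>x * y\<bar> \<le> x^2 + s^2 * y^2" by (simp add: power2_eq_square algebra_simps abs_mult)
  thus ?thesis using assms by (simp add: field_simps power2_eq_square)
qed

lemma Z_bound2: assumes n: "n \<ge> 2" shows "\<bar>Zc m n\<bar> \<le> (Mo (2*m-2) n / sqrt (real n) + sqrt (real n) * EY n) / 2"
proof -
  have sp: "sqrt (real n) > 0" using n by simp
  have "\<bar>\<Sum>\<sigma>\<in>PP n. Xn n \<sigma> ^ (2*m-2) * Yc n \<sigma>\<bar>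
     \<le> (\<Sum>\<sigma>\<in>PP n. (Xn n \<sigma> ^ (2*(2*m-2)) / sqrt (real n) + sqrt (real n) * (Yc n \<sigma>)^2) / 2)"
  proof (rule order_trans[OF sum_abs], rule sum_mono)
    fix \<sigma> assume s: "\<sigma> \<in> PP n"
    show "\<bar>Xn n \<sigma> ^ (2*m-2) * Yc n \<sigma>\<bar> \<le> (Xn n \<sigma> ^ (2*(2*m-2)) / sqrt (real n) + sqrt (real n) * (Yc n \<sigma>)^2) / 2"
      using young[OF sp, of "Xn n \<sigma> ^ (2*m-2)" "Yc n \<sigma>"] by (simp add: power_mult[symmetric] mult.commute)
  qed
  also have "\<dots> = ((\<Sum>\<sigma>\<in>PP n. Xn n \<sigma> ^ (2*(2*m-2))) / sqrt (real n) + sqrt (real n) * (\<Sum>\<sigma>\<in>PP n. (Yc n \<sigma>)^2)) / 2"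
    by (simp add: sum.distrib sum_divide_distrib[symmetric] sum_distrib_left[symmetric])
  finally have h: "\<bar>\<Sum>\<sigma>\<in>PP n. Xn n \<sigma> ^ (2*m-2) * Yc n \<sigma>\<bar> \<le> \<dots>" .
  have "\<bar>Zc m n\<bar> = (1 / fact n) * \<bar>\<Sum>\<sigma>\<in>PP n. Xn n \<sigma> ^ (2*m-2) * Yc n \<sigma>\<bar>"
    by (simp add: Zc_def abs_mult)
  also have "\<dots> \<le> (1 / fact n) * (((\<Sum>\<sigma>\<in>PP n. Xn n \<sigma> ^ (2*(2*m-2))) / sqrt (real n) + sqrt (real n) * (\<Sum>\<sigma>\<in>PP n. (Yc n \<sigma>)^2)) / 2)"
    by (intro mult_left_mono h) auto
  also have "\<dots> = (Mo (2*m-2) n / sqrt (real n) + sqrt (real n) * EY n) / 2"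
    by (simp add: Mo_def moment_def EY_def PP_def field_simps)
  finally show ?thesis .
qed

lemma EY_bound: assumes n: "n \<ge> 16" shows "EY n \<le> 10 / real n"
proof -
  have n3: "n \<ge> 3" and n0: "n > 0" using n by auto
  interpret H2: hs "{1..n}" "al n" "ga n" "(cc n)^2" by (rule inst2[OF n3])
  define N where "N = real n"
  have N16: "N \<ge> 16" using n by (simp add: N_def)
  define \<delta> where "\<delta> = 4 / N"
  define F where "F = (fact n :: real)"
  define T where "T = (\<Sum>\<sigma>\<in>PP n. (Yc n \<sigma>)^2)"
  have F0: "F > 0" by (simp add: F_def)
  have T0: "T \<ge> 0" by (simp add: T_def sum_nonneg)
  have csq: "(cc n)^2 = 1 / N^3" using cc_sq[OF n0] by (simp add: N_def)
  have d1: "\<delta> \<le> 1" and d0: "0 \<le> \<delta>" using N16 by (auto simp: \<delta>_def)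
  have dB: "\<bar>H2.D \<sigma> I J\<bar> \<le> \<delta>" if "\<sigma> \<in> H2.P" "I \<in> {1..n}" "J \<in> {1..n}" for \<sigma> I J
  proof -
    have "\<bar>H2.D \<sigma> I J\<bar> \<le> \<bar>(cc n)^2\<bar> * (2 * 1) * (2 * (real n)^2)"
      by (rule H2.D_bound[OF that]) (auto simp: al_bound ga_bound)
    also have "\<dots> = \<delta>" unfolding csq \<delta>_def using N16 by (simp add: N_def[symmetric] power3_eq_cube power2_eq_square)
    finally show ?thesis .
  qed
  have PPeq: "H2.P = PP n" unfolding H2.P_def PP_def ..
  have Xeq: "H2.X = Yc n" unfolding Yc_def ..
  note MI = H2.main_ineq[of 1, OF _ d1 d0 dB, unfolded PPeq Xeq]
  define G where "G \<sigma> = ((cc n)^2)^2 * (2 * N * H2.V \<sigma> + 2 * (\<Sum>j\<in>{1..n}. (al n j)^2) * (\<Sum>j\<in>{1..n}. (ga n j)^2))" for \<sigma>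
  have pa: "(\<Sum>j\<in>{1..n}. (al n j)^2) \<le> N"
  proof -
    have "(\<Sum>j\<in>{1..n}. (al n j)^2) \<le> (\<Sum>j\<in>{1..n}. 1)"
      by (intro sum_mono) (use al_bound in \<open>simp add: abs_square_le_1\<close>)
    thus ?thesis by (simp add: N_def)
  qed
  have pg: "(\<Sum>j\<in>{1..n}. (ga n j)^2) \<le> N * N^4"
  proof -
    have "(\<Sum>j\<in>{1..n}. (ga n j)^2) \<le> (\<Sum>j\<in>{1..n}. N^4)"
    proof (intro sum_mono)
      fix j assume "j \<in> {1..n}"
      hence "\<bar>ga n j\<bar> \<le> N^2" using ga_bound by (simp add: N_def)
      hence "(ga n j)^2 \<le> (N^2)^2" using abs_le_square_iff[of "ga n j" "N^2"] by simp
      thus "(ga n j)^2 \<le> N^4" by simp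
    qed
    thus ?thesis by (simp add: N_def)
  qed
  have G4: "0 \<le> G \<sigma> \<and> G \<sigma> \<le> 4" if s: "\<sigma> \<in> PP n" for \<sigma>
  proof -
    have s': "\<sigma> \<in> H2.P" using s unfolding PPeq .
    have vb: "0 \<le> H2.V \<sigma> \<and> H2.V \<sigma> \<le> N * (1^2 * (N^2)^2)"
      using H2.V_bound[OF s', of 1 "N^2"] al_bound ga_bound by (simp add: N_def)
    have p0: "0 \<le> (\<Sum>j\<in>{1..n}. (al n j)^2)" "0 \<le> (\<Sum>j\<in>{1..n}. (ga n j)^2)" by (auto intro: sum_nonneg)
    have "2 * N * H2.V \<sigma> + 2 * (\<Sum>j\<in>{1..n}. (al n j)^2) * (\<Sum>j\<in>{1..n}. (ga n j)^2) \<le> 2 * N * (N * N^4) + 2 * N * (N * N^4)"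
      using vb pa pg p0 N16 by (intro add_mono mult_mono mult_left_mono) (auto simp: power2_eq_square power4_eq_xxxx)
    moreover have "0 \<le> 2 * N * H2.V \<sigma> + 2 * (\<Sum>j\<in>{1..n}. (al n j)^2) * (\<Sum>j\<in>{1..n}. (ga n j)^2)"
      using vb p0 N16 by simp
    ultimately show ?thesis unfolding G_def csq using N16
      by (auto simp: field_simps power3_eq_cube power2_eq_square power4_eq_xxxx)
  qed
  have sumG: "(\<Sum>\<sigma>\<in>PP n. G \<sigma>) \<le> 4 * F"
  proof -
    have "(\<Sum>\<sigma>\<in>PP n. G \<sigma>) \<le> (\<Sum>\<sigma>\<in>PP n. 4)" using G4 by (intro sum_mono) auto
    thus ?thesis by (simp add: card_PP F_def)
  qed
  have cardS: "real (card {1..n}) = N" by (simp add: N_def)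
  have e3: "(\<Sum>\<sigma>\<in>PP n. 1 + Yc n \<sigma> ^ (2*1)) = F + T"
    by (simp add: sum.distrib card_PP F_def T_def)
  have "\<bar>4 * N * T - ((\<Sum>\<sigma>\<in>PP n. G \<sigma>) + 4 * T)\<bar> \<le> N^2 * \<delta>^3 * 4 * (F + T)"
    using MI unfolding e3 cardS unfolding T_def G_def by (simp add: sum.distrib sum_distrib_left)
  hence "4 * N * T - ((\<Sum>\<sigma>\<in>PP n. G \<sigma>) + 4 * T) \<le> N^2 * \<delta>^3 * 4 * (F + T)"
    by simp
  moreover have "N^2 * \<delta>^3 * 4 * (F + T) = 256 * (F + T) / N"
    unfolding \<delta>_def using N16 by (simp add: field_simps power3_eq_cube power2_eq_square)
  moreover have "256 * (F + T) / N \<le> 16 * (F + T)"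
  proof -
    have a: "256 * (F + T) \<le> 16 * N * (F + T)" using N16 F0 T0 by (intro mult_right_mono) auto
    have "256 * (F + T) / N \<le> 16 * N * (F + T) / N" by (rule divide_right_mono[OF a]) (use N16 in auto)
    also have "\<dots> = 16 * (F + T)" using N16 by simp
    finally show ?thesis .
  qed
  ultimately have h0: "4 * N * T - ((\<Sum>\<sigma>\<in>PP n. G \<sigma>) + 4 * T) \<le> 16 * (F + T)" by simp
  have h: "4 * N * T \<le> 20 * T + 20 * F" using h0 sumG by (simp add: algebra_simps)
  have "2 * N * T \<le> (4 * N - 20) * T" using N16 T0 by (intro mult_right_mono) auto
  hence "2 * N * T \<le> 20 * F" using h by (simp add: algebra_simps)
  hence "T / F \<le> 10 / N" using F0 N16 by (simp add: field_simps)
  thus ?thesis by (simp add: EY_def T_def F_def N_def)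
qed




definition rho :: "nat \<Rightarrow> nat \<Rightarrow> nat" where "rho n l = (if l \<in> {1..n} then n + 1 - l else l)"

lemma rho_in: assumes "l \<in> {1..n}" shows "rho n l \<in> {1..n} \<and> rho n (rho n l) = l"
proof -
  have l: "1 \<le> l" "l \<le> n" using assms by auto
  have a: "1 \<le> n + 1 - l" "n + 1 - l \<le> n" "n + 1 - (n + 1 - l) = l" using l by auto
  show ?thesis using a l by (simp add: rho_def)
qed

lemma rho_permutes: "rho n permutes {1..n}"
proof (rule bij_imp_permutes)
  show "bij_betw (rho n) {1..n} {1..n}"
    by (rule bij_betw_byWitness[where f'="rho n"]) (use rho_in in blast)+
  show "\<And>x. x \<notin> {1..n} \<Longrightarrow> rho n x = x" unfolding rho_def by auto
qed

lemma X1_rho: assumes n: "n \<ge> 2" and s: "\<sigma> \<in> PP n" shows "X1 n (rho n \<circ> \<sigma>) = - X1 n \<sigma>"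
proof -
  have "cb n (rho n (\<sigma> j)) = - cb n (\<sigma> j)" if "j \<in> {1..n}" for j
  proof -
    have "\<sigma> j \<in> {1..n}" using permutes_in_image[of \<sigma> "{1..n}" j] s that by (simp add: PP_def)
    thus ?thesis by (auto simp: rho_def cb_def of_nat_diff field_simps)
  qed
  thus ?thesis unfolding X1_def hs.X_def[OF inst1[OF n]]
    by (simp add: sum_negf)
qed

lemma odd_zero: assumes n: "n \<ge> 2" shows "moment n (2*m+1) = 0"
proof -
  define S where "S = (\<Sum>\<sigma>\<in>PP n. X1 n \<sigma> ^ (2*m+1))"
  have "S = (\<Sum>\<sigma>\<in>PP n. X1 n (rho n \<circ> \<sigma>) ^ (2*m+1))"
    unfolding S_def PP_def by (rule setum_permutations_compose_left[OF rho_permutes])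
  also have "\<dots> = (\<Sum>\<sigma>\<in>PP n. - (X1 n \<sigma> ^ (2*m+1)))"
    by (rule sum.cong[OF refl]) (simp add: X1_rho[OF n])
  also have "\<dots> = - S" by (simp add: S_def sum_negf)
  finally have "S = 0" by simp
  moreover have "moment n (2*m+1) = (1 / fact n) * S"
    unfolding moment_def S_def PP_def by (intro arg_cong[where f="\<lambda>x. (1 / fact n) * x"] sum.cong) (auto simp: Xn_eq[OF n] X1_def)
  ultimately show ?thesis by simp
qed

lemma bdd_step:
  fixes M M' Z q k e x K0 :: real
  assumes h: "\<bar>M - k * (Z / 2 + q * M' + M * x)\<bar> \<le> e * (1 + M)"
    and Z: "\<bar>Z\<bar> \<le> M'" and q0: "0 \<le> q" and q1: "q \<le> 1" and M'0: "0 \<le> M'" and M'K: "M' \<le> K0"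
    and k0: "0 \<le> k" and x0: "0 \<le> x" and small: "k * x + e < 1/2" and e0: "0 \<le> e" and M0: "0 \<le> M"
  shows "M \<le> 3 * k * K0 + 1"
proof -
  have a1: "k * Z \<le> k * M'" using Z k0 by (intro mult_left_mono) auto
  have "q * M' \<le> 1 * M'" using q1 M'0 by (intro mult_right_mono)
  hence a2: "k * (q * M') \<le> k * M'" using k0 by (intro mult_left_mono) auto
  have a3: "k * M' \<le> k * K0" using M'K k0 by (intro mult_left_mono)
  have a4: "(k * x + e) * M \<le> (1/2) * M" using small M0 by (intro mult_right_mono) auto
  have "M \<le> k * (Z / 2 + q * M' + M * x) + e * (1 + M)" using h by linarith
  also have "\<dots> = (k * Z) / 2 + k * (q * M') + (k * x + e) * M + e" by (simp add: algebra_simps)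
  finally have "M \<le> (k * Z) / 2 + k * (q * M') + (k * x + e) * M + e" .
  moreover have a5: "0 \<le> k * x" using k0 x0 by simp
  ultimately show ?thesis using a1 a2 a3 a4 small e0 by linarith
qed

lemma Mo_Suc_ineq:
  assumes n: "n \<ge> 16"
  shows "\<bar>Mo (Suc m) n - real (2 * Suc m - 1) * (Zc (Suc m) n / 2 + ((real n)^2 - 1) / (24 * (real n)^2) * Mo m n + Mo (Suc m) n * (1 / real n))\<bar>
     \<le> 16 * (real (2 * Suc m - 1) ^ 2 * 2 ^ (2 * Suc m)) / sqrt (real n) * (1 + Mo (Suc m) n)"
  using ineq_main[OF n, of "Suc m"] by simp

lemma Mo_bdd: "\<exists>K. eventually (\<lambda>n. Mo m n \<le> K) sequentially"
proof (induction m)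
  case 0 show ?case by (rule exI[of _ 1]) (simp add: Mo_0)
next
  case (Suc m)
  then obtain K0 where K0: "eventually (\<lambda>n. Mo m n \<le> K0) sequentially" by blast
  define k where "k = real (2 * Suc m - 1)"
  define C where "C = 16 * (real (2 * Suc m - 1) ^ 2 * 2 ^ (2 * Suc m))"
  have "(\<lambda>n. k * (1 / real n) + C / sqrt (real n)) \<longlonglongrightarrow> 0" by real_asymp
  hence ev1: "eventually (\<lambda>n. k * (1 / real n) + C / sqrt (real n) < 1/2) sequentially"
    by (rule order_tendstoD) simp
  have ev2: "eventually (\<lambda>n. n \<ge> 16) sequentially" by (rule eventually_ge_at_top)
  have "eventually (\<lambda>n. Mo (Suc m) n \<le> 3 * k * K0 + 1) sequentially"
    using ev1 ev2 K0
  proof eventually_elim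
    case (elim n)
    have n3: "n \<ge> 3" using elim by simp
    show ?case
    proof (rule bdd_step[OF Mo_Suc_ineq[OF elim(2), of m, folded k_def C_def]])
      show "\<bar>Zc (Suc m) n\<bar> \<le> Mo m n" using Z_bound1[OF n3, of "Suc m"] by simp
      show "0 \<le> ((real n)^2 - 1) / (24 * (real n)^2)" using n3 by (simp add: one_le_power)
      show "((real n)^2 - 1) / (24 * (real n)^2) \<le> 1" using n3 by (simp add: field_simps)
    next
      show "0 \<le> Mo m n" by (rule Mo_nonneg)
      show "Mo m n \<le> K0" using elim by simp
      show "0 \<le> k" by (simp add: k_def)
      show "0 \<le> 1 / real n" by simp
      show "k * (1 / real n) + C / sqrt (real n) < 1/2" using elim by simp
      show "0 \<le> C / sqrt (real n)" by (simp add: C_def)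
      show "0 \<le> Mo (Suc m) n" by (rule Mo_nonneg)
    qed
  qed
  thus ?case by blast
qed

lemma L_step: "real (2 * Suc m - 1) * (fact (2 * m) / fact m / 48 ^ m / 24)
   = (fact (2 * Suc m) / fact (Suc m) / 48 ^ Suc m :: real)"
proof -
  define a where "a = (fact (2 * m) :: real)"
  define b where "b = (fact m :: real)"
  define c where "c = ((48::real) ^ m)"
  have b0: "b > 0" and c0: "c > 0" by (auto simp: b_def c_def)
  have e1: "fact (2 * Suc m) = (real m + 1) * (2 * (2 * real m + 1) * a)"
    by (simp add: fact_Suc algebra_simps a_def)
  have e2: "fact (Suc m) * (48::real) ^ Suc m = (real m + 1) * (b * 48 * c)" by (simp add: fact_Suc b_def c_def algebra_simps)
  have "(fact (2 * Suc m) / fact (Suc m) / 48 ^ Suc m :: real) = fact (2 * Suc m) / (fact (Suc m) * 48 ^ Suc m)"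
    by (simp only: divide_divide_eq_left)
  also have "\<dots> = ((real m + 1) * (2 * (2 * real m + 1) * a)) / ((real m + 1) * (b * 48 * c))"
    by (simp only: e1 e2)
  also have "\<dots> = (2 * (2 * real m + 1) * a) / (b * 48 * c)"
    by (rule mult_divide_mult_cancel_left) simp
  also have "\<dots> = real (2 * Suc m - 1) * (a / b / c / 24)" using b0 c0 by (simp add: field_simps)
  finally have "(fact (2 * Suc m) / fact (Suc m) / 48 ^ Suc m :: real) = real (2 * Suc m - 1) * (a / b / c / 24)" .
  thus ?thesis unfolding a_def b_def c_def by (rule sym)
qed

lemma Mo_lim: "Mo m \<longlonglongrightarrow> fact (2 * m) / fact m / 48 ^ m"
proof (induction m)
  case 0 show ?case by (simp add: Mo_0)
next
  case (Suc m)
  define L where "L = (fact (2 * m) / fact m / 48 ^ m :: real)"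
  define k where "k = real (2 * Suc m - 1)"
  define C where "C = 16 * (real (2 * Suc m - 1) ^ 2 * 2 ^ (2 * Suc m))"
  define q where "q n = ((real n)^2 - 1) / (24 * (real n)^2)" for n :: nat
  define err where "err n = Mo (Suc m) n * (1 - k / real n) - k * (Zc (Suc m) n / 2 + q n * Mo m n)" for n
  obtain K1 where K1: "eventually (\<lambda>n. Mo (Suc m) n \<le> K1) sequentially" using Mo_bdd by blast
  obtain K2 where K2: "eventually (\<lambda>n. Mo (2 * Suc m - 2) n \<le> K2) sequentially" using Mo_bdd by blast
  have ev16: "eventually (\<lambda>n. n \<ge> 16) sequentially" by (rule eventually_ge_at_top)
  have err0: "err \<longlonglongrightarrow> 0"
  proof (rule Lim_null_comparison)
    show "eventually (\<lambda>n. norm (err n) \<le> C / sqrt (real n) * (1 + K1)) sequentially"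
      using K1 ev16
    proof eventually_elim
      case (elim n)
      have "err n = Mo (Suc m) n - k * (Zc (Suc m) n / 2 + q n * Mo m n + Mo (Suc m) n * (1 / real n))"
        unfolding err_def by (simp add: algebra_simps)
      hence "\<bar>err n\<bar> \<le> C / sqrt (real n) * (1 + Mo (Suc m) n)"
        using Mo_Suc_ineq[OF elim(2), of m] by (simp add: k_def C_def q_def)
      also have "\<dots> \<le> C / sqrt (real n) * (1 + K1)"
        using elim by (intro mult_left_mono) (auto simp: C_def)
      finally show ?case by simp
    qed
    show "(\<lambda>n. C / sqrt (real n) * (1 + K1)) \<longlonglongrightarrow> 0" by real_asymp
  qed
  have Z0: "(\<lambda>n. Zc (Suc m) n) \<longlonglongrightarrow> 0"
  proof (rule Lim_null_comparison)
    show "eventually (\<lambda>n. norm (Zc (Suc m) n) \<le> (K2 / sqrt (real n) + sqrt (real n) * (10 / real n)) / 2) sequentially"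
      using K2 ev16
    proof eventually_elim
      case (elim n)
      have n2: "n \<ge> 2" using elim by simp
      have "\<bar>Zc (Suc m) n\<bar> \<le> (Mo (2 * Suc m - 2) n / sqrt (real n) + sqrt (real n) * EY n) / 2"
        by (rule Z_bound2[OF n2])
      also have "\<dots> \<le> (K2 / sqrt (real n) + sqrt (real n) * (10 / real n)) / 2"
        using elim EY_bound[OF elim(2)]
        by (intro divide_right_mono add_mono mult_left_mono) auto
      finally show ?case by simp
    qed
    show "(\<lambda>n. (K2 / sqrt (real n) + sqrt (real n) * (10 / real n)) / 2) \<longlonglongrightarrow> 0" by real_asymp
  qed
  have q0: "q \<longlonglongrightarrow> 1/24" unfolding q_def by real_asymp
  have "(\<lambda>n. err n + k * (Zc (Suc m) n / 2 + q n * Mo m n)) \<longlonglongrightarrow> 0 + k * (0 / 2 + 1/24 * L)"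
    using Suc.IH unfolding L_def[symmetric] by (intro tendsto_intros err0 Z0 q0) simp
  hence A: "(\<lambda>n. Mo (Suc m) n * (1 - k / real n)) \<longlonglongrightarrow> k * (L / 24)"
    by (simp add: err_def)
  have B: "(\<lambda>n. 1 - k / real n) \<longlonglongrightarrow> 1" by real_asymp
  have "(\<lambda>n. Mo (Suc m) n * (1 - k / real n) / (1 - k / real n)) \<longlonglongrightarrow> k * (L / 24) / 1"
    by (rule tendsto_divide[OF A B]) simp
  moreover have "eventually (\<lambda>n. Mo (Suc m) n * (1 - k / real n) / (1 - k / real n) = Mo (Suc m) n) sequentially"
  proof -
    have "eventually (\<lambda>n. 1 - k / real n > 0) sequentially" using B by (rule order_tendstoD) simp
    thus ?thesis by eventually_elim (rule nonzero_mult_div_cancel_right; linarith)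
  qed
  ultimately have lim: "Mo (Suc m) \<longlonglongrightarrow> k * (L / 24)"
    by (simp add: tendsto_cong)
  have eq: "k * (L / 24) = fact (2 * Suc m) / fact (Suc m) / 48 ^ Suc m"
    unfolding k_def L_def by (rule L_step)
  show ?case using lim unfolding eq .
qed

theorem lemma1:
  fixes m :: nat
  assumes "m \<ge> 1"
  shows "((\<lambda>n. moment n (2 * m)) \<longlonglongrightarrow> fact (2 * m) / fact m / 48 ^ m) \<and>
         (\<lambda>n. moment n (2 * m - 1)) \<longlonglongrightarrow> 0"
proof
  show "(\<lambda>n. moment n (2 * m)) \<longlonglongrightarrow> fact (2 * m) / fact m / 48 ^ m"
    using Mo_lim[of m] unfolding Mo_def .
  obtain j where j: "m = Suc j" using assms by (cases m) auto
  have "eventually (\<lambda>n. moment n (2 * m - 1) = 0) sequentially"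
    using eventually_ge_at_top[of 2]
  proof eventually_elim
    case (elim n)
    have "2 * m - 1 = 2 * j + 1" using j by simp
    thus ?case using odd_zero[OF elim] by simp
  qed
  thus "(\<lambda>n. moment n (2 * m - 1)) \<longlonglongrightarrow> 0" by (rule tendsto_eventually)
qed


end
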